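(* Let $S$ be a Rauzy scheme for a recurrent infinite word $W$, let $l_{\max}$ be the maximum length of the words written on the edges of $S$, and let $A$ be a finite factor of $W$. If $s$ is a nonextendable path in $S(A)$, then $|A|-2l_{\max}\le|F(s)|\le|A|$.
   Context: For a finite factor $A$ of $W$, $S(A)$ denotes the set of symmetric paths $s$ of $S$ with $F(s)\sqsubseteq A$; a path $s\in S(A)$ is nonextendable if there is no $s'\in S(A)$ with $s\sqsubseteq s'$ and $s'\neq s$. An infinite word is recurrent if every factor occurs infinitely often. $u\sqsubseteq w$: $u$ is a factor of $w$; $u\sqsubseteq_k w$: $u$ occurs in $w$ at least $k$ times. A graph with words is a strongly connected finite directed graph (multiple edges and loops allowed) in which every edge $e$ carries a front word $F(e)$ and a back word $B(e)$, and every vertex either has in-degree $1$ and out-degree $>1$ (distributing vertex) or in-degree $>1$ and out-degree $1$ (collecting vertex). A path is a finite nonempty sequence of edges $v_1\dots v_n$ with each $v_{i+1}$ starting where $v_i$ ends; subpaths and $s_1\sqsubseteq s_2$, $s_1\sqsubseteq_k s_2$ are defined via edge records (words over the alphabet of edges). A path is symmetric if its first edge starts at a collecting vertex and its last edge ends at a distributing vertex. For $s=v_1\dots v_n$, $F(s)$ is the concatenation, in order, of the front words of $v_1$ and of all $v_i$ ($i\ge2$) starting at a distributing vertex; $B(s)$ is the concatenation, in order, of the back words of all $v_i$ ($i\le n-1$) ending at a collecting vertex and of $v_n$. A Rauzy scheme for $W$ is a graph with words such that: (1) it has more than one edge; (2) front words of edges leaving a common distributing vertex have pairwise distinct first letters,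 and back words of edges entering a common collecting vertex have pairwise distinct last letters; (3) $F(s)=B(s)$ for every symmetric path $s$; (4) for symmetric paths $s_1,s_2$ and $k\ge1$, $F(s_1)\sqsubseteq_k F(s_2)$ implies $s_1\sqsubseteq_k s_2$; (5) all words on edges are factors of $W$; (6) every factor of $W$ is a factor of $F(s)$ for some symmetric path $s$; (7) for every edge $e$ there is a factor $u_e$ of $W$ such that every symmetric path $s$ with $u_e\sqsubseteq F(s)$ passes through $e$. *)

theory Defs
  imports Main "HOL-Library.Sublist"
begin

definition factor_of :: "'a list \<Rightarrow> (nat \<Rightarrow> 'a) \<Rightarrow> bool" where
  "factor_of u W \<longleftrightarrow> (\<exists>i. u = map W [i..<i + length u])"

definition recurrent :: "(nat \<Rightarrow> 'a) \<Rightarrow> bool" where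
  "recurrent W \<longleftrightarrow> (\<forall>u. factor_of u W \<longrightarrow>
      infinite {i. u = map W [i..<i + length u]})"

definition occ_count :: "'a list \<Rightarrow> 'a list \<Rightarrow> nat" where
  "occ_count u w = card {i. i + length u \<le> length w \<and> take (length u) (drop i w) = u}"

definition occurs_k :: "'a list \<Rightarrow> nat \<Rightarrow> 'a list \<Rightarrow> bool" where
  "occurs_k u k w \<longleftrightarrow> k \<le> occ_count u w"

text \<open>A graph is given by a vertex set V, an edge set E (edges are
  elements of an arbitrary type, so multiple edges and loops are allowed),
  source and target maps src, tgt, and front/back words Fw, Bw on edges.\<close>

definition indeg :: "'e set \<Rightarrow> ('e \<Rightarrow> 'v) \<Rightarrow> 'v \<Rightarrow> nat" where
  "indeg E tgt v = card {e \<in> E. tgt e = v}"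

definition outdeg :: "'e set \<Rightarrow> ('e \<Rightarrow> 'v) \<Rightarrow> 'v \<Rightarrow> nat" where
  "outdeg E src v = card {e \<in> E. src e = v}"

definition distributing :: "'e set \<Rightarrow> ('e \<Rightarrow> 'v) \<Rightarrow> ('e \<Rightarrow> 'v) \<Rightarrow> 'v \<Rightarrow> bool" where
  "distributing E src tgt v \<longleftrightarrow> indeg E tgt v = 1 \<and> outdeg E src v > 1"

definition collecting :: "'e set \<Rightarrow> ('e \<Rightarrow> 'v) \<Rightarrow> ('e \<Rightarrow> 'v) \<Rightarrow> 'v \<Rightarrow> bool" where
  "collecting E src tgt v \<longleftrightarrow> indeg E tgt v > 1 \<and> outdeg E src v = 1"

definition strongly_connected :: "'v set \<Rightarrow> 'e set \<Rightarrow> ('e \<Rightarrow> 'v) \<Rightarrow> ('e \<Rightarrow> 'v) \<Rightarrow> bool" where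
  "strongly_connected V E src tgt \<longleftrightarrow>
     (\<forall>u\<in>V. \<forall>v\<in>V. (u, v) \<in> {(src e, tgt e) | e. e \<in> E}\<^sup>*)"

definition graph_with_words ::
  "'v set \<Rightarrow> 'e set \<Rightarrow> ('e \<Rightarrow> 'v) \<Rightarrow> ('e \<Rightarrow> 'v) \<Rightarrow> bool" where
  "graph_with_words V E src tgt \<longleftrightarrow>
     finite V \<and> finite E \<and> V \<noteq> {} \<and>
     (\<forall>e\<in>E. src e \<in> V \<and> tgt e \<in> V) \<and>
     strongly_connected V E src tgt \<and>
     (\<forall>v\<in>V. distributing E src tgt v \<or> collecting E src tgt v)"

definition is_path :: "'e set \<Rightarrow> ('e \<Rightarrow> 'v) \<Rightarrow> ('e \<Rightarrow> 'v) \<Rightarrow> 'e list \<Rightarrow> bool" where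
  "is_path E src tgt s \<longleftrightarrow> s \<noteq> [] \<and> set s \<subseteq> E \<and>
     (\<forall>i. Suc i < length s \<longrightarrow> src (s ! Suc i) = tgt (s ! i))"

definition symmetric_path :: "'e set \<Rightarrow> ('e \<Rightarrow> 'v) \<Rightarrow> ('e \<Rightarrow> 'v) \<Rightarrow> 'e list \<Rightarrow> bool" where
  "symmetric_path E src tgt s \<longleftrightarrow> is_path E src tgt s \<and>
     collecting E src tgt (src (hd s)) \<and> distributing E src tgt (tgt (last s))"

definition path_F :: "'e set \<Rightarrow> ('e \<Rightarrow> 'v) \<Rightarrow> ('e \<Rightarrow> 'v) \<Rightarrow> ('e \<Rightarrow> 'a list) \<Rightarrow> 'e list \<Rightarrow> 'a list" where
  "path_F E src tgt Fw s =
     Fw (hd s) @ concat (map Fw (filter (\<lambda>e. distributing E src tgt (src e)) (tl s)))"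

definition path_B :: "'e set \<Rightarrow> ('e \<Rightarrow> 'v) \<Rightarrow> ('e \<Rightarrow> 'v) \<Rightarrow> ('e \<Rightarrow> 'a list) \<Rightarrow> 'e list \<Rightarrow> 'a list" where
  "path_B E src tgt Bw s =
     concat (map Bw (filter (\<lambda>e. collecting E src tgt (tgt e)) (butlast s))) @ Bw (last s)"

definition rauzy_scheme ::
  "(nat \<Rightarrow> 'a) \<Rightarrow> 'v set \<Rightarrow> 'e set \<Rightarrow> ('e \<Rightarrow> 'v) \<Rightarrow> ('e \<Rightarrow> 'v)
     \<Rightarrow> ('e \<Rightarrow> 'a list) \<Rightarrow> ('e \<Rightarrow> 'a list) \<Rightarrow> bool" where
  "rauzy_scheme W V E src tgt Fw Bw \<longleftrightarrow>
     graph_with_words V E src tgt \<and>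
     \<comment> \<open>(1)\<close>
     card E > 1 \<and>
     \<comment> \<open>(2)\<close>
     (\<forall>e1\<in>E. \<forall>e2\<in>E. e1 \<noteq> e2 \<and> src e1 = src e2 \<and> distributing E src tgt (src e1) \<longrightarrow>
        Fw e1 \<noteq> [] \<and> Fw e2 \<noteq> [] \<and> hd (Fw e1) \<noteq> hd (Fw e2)) \<and>
     (\<forall>e1\<in>E. \<forall>e2\<in>E. e1 \<noteq> e2 \<and> tgt e1 = tgt e2 \<and> collecting E src tgt (tgt e1) \<longrightarrow>
        Bw e1 \<noteq> [] \<and> Bw e2 \<noteq> [] \<and> last (Bw e1) \<noteq> last (Bw e2)) \<and>
     \<comment> \<open>(3)\<close>
     (\<forall>s. symmetric_path E src tgt s \<longrightarrow> path_F E src tgt Fw s = path_B E src tgt Bw s) \<and>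
     \<comment> \<open>(4)\<close>
     (\<forall>s1 s2 k. symmetric_path E src tgt s1 \<and> symmetric_path E src tgt s2 \<and> k \<ge> 1 \<and>
        occurs_k (path_F E src tgt Fw s1) k (path_F E src tgt Fw s2) \<longrightarrow> occurs_k s1 k s2) \<and>
     \<comment> \<open>(5)\<close>
     (\<forall>e\<in>E. factor_of (Fw e) W \<and> factor_of (Bw e) W) \<and>
     \<comment> \<open>(6)\<close>
     (\<forall>u. factor_of u W \<longrightarrow>
        (\<exists>s. symmetric_path E src tgt s \<and> sublist u (path_F E src tgt Fw s))) \<and>
     \<comment> \<open>(7)\<close>
     (\<forall>e\<in>E. \<exists>u. factor_of u W \<and>
        (\<forall>s. symmetric_path E src tgt s \<and> sublist u (path_F E src tgt Fw s) \<longrightarrow> e \<in> set s))"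

definition l_max :: "'e set \<Rightarrow> ('e \<Rightarrow> 'a list) \<Rightarrow> ('e \<Rightarrow> 'a list) \<Rightarrow> nat" where
  "l_max E Fw Bw = Max ((\<lambda>e. length (Fw e)) ` E \<union> (\<lambda>e. length (Bw e)) ` E)"

definition S_of :: "'e set \<Rightarrow> ('e \<Rightarrow> 'v) \<Rightarrow> ('e \<Rightarrow> 'v) \<Rightarrow> ('e \<Rightarrow> 'a list) \<Rightarrow> 'a list \<Rightarrow> 'e list set" where
  "S_of E src tgt Fw A = {s. symmetric_path E src tgt s \<and> sublist (path_F E src tgt Fw s) A}"

definition nonextendable ::
  "'e set \<Rightarrow> ('e \<Rightarrow> 'v) \<Rightarrow> ('e \<Rightarrow> 'v) \<Rightarrow> ('e \<Rightarrow> 'a list) \<Rightarrow> 'a list \<Rightarrow> 'e list \<Rightarrow> bool" where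
  "nonextendable E src tgt Fw A s \<longleftrightarrow> s \<in> S_of E src tgt Fw A \<and>
     \<not> (\<exists>s'\<in>S_of E src tgt Fw A. sublist s s' \<and> s' \<noteq> s)"

end

theory Submission
  imports Defs
begin

locale RS =
  fixes E :: "'e set" and src tgt :: "'e \<Rightarrow> 'v" and Fw Bw :: "'e \<Rightarrow> 'a list"
  assumes finE: "finite E"
  and collBw: "\<And>e. e \<in> E \<Longrightarrow> collecting E src tgt (tgt e) \<Longrightarrow> Bw e \<noteq> []"
  and FB: "\<And>s. symmetric_path E src tgt s \<Longrightarrow> path_F E src tgt Fw s = path_B E src tgt Bw s"
  and occ4: "\<And>s1 s2 k. symmetric_path E src tgt s1 \<Longrightarrow> symmetric_path E src tgt s2 \<Longrightarrow> k \<ge> 1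
     \<Longrightarrow> occurs_k (path_F E src tgt Fw s1) k (path_F E src tgt Fw s2) \<Longrightarrow> occurs_k s1 k s2"
begin

abbreviation "CC v \<equiv> collecting E src tgt v"
abbreviation "DD v \<equiv> distributing E src tgt v"
abbreviation "FF \<equiv> path_F E src tgt Fw"
abbreviation "BB \<equiv> path_B E src tgt Bw"
abbreviation "SY \<equiv> symmetric_path E src tgt"
abbreviation "pth \<equiv> is_path E src tgt"
definition "Bp p = concat (map Bw (filter (\<lambda>e. CC (tgt e)) p))"
definition "Fq q = concat (map Fw (filter (\<lambda>e. DD (src e)) q))"

lemma F_app: "s \<noteq> [] \<Longrightarrow> FF (s @ q) = FF s @ Fq q"
  by (cases s) (simp_all add: path_F_def Fq_def)

lemma B_app: "s \<noteq> [] \<Longrightarrow> BB (p @ s) = Bp p @ BB s"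
  by (simp add: path_B_def Bp_def butlast_append)

lemma Bp_app: "Bp (p @ q) = Bp p @ Bp q" by (simp add: Bp_def)

lemma path_mid: assumes "pth (p @ u @ q)" "u \<noteq> []" shows "pth u"
proof -
  have "set u \<subseteq> E" using assms by (auto simp: is_path_def)
  moreover have "src (u ! Suc i) = tgt (u ! i)" if "Suc i < length u" for i
  proof -
    have "Suc (length p + i) < length (p @ u @ q)" using that by simp
    then have "src ((p@u@q) ! Suc (length p + i)) = tgt ((p@u@q) ! (length p + i))"
      using assms(1) unfolding is_path_def by blast
    then show ?thesis using that by (simp add: nth_append)
  qed
  ultimately show ?thesis using assms(2) by (simp add: is_path_def)
qed

lemma path_link: assumes "pth (p @ q)" "p \<noteq> []" "q \<noteq> []" shows "src (hd q) = tgt (last p)"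
proof -
  have "Suc (length p - 1) < length (p @ q)" using assms by (cases q) auto
  then have "src ((p@q) ! Suc (length p - 1)) = tgt ((p@q) ! (length p - 1))"
    using assms(1) unfolding is_path_def by blast
  then show ?thesis using assms by (simp add: nth_append hd_conv_nth last_conv_nth)
qed

lemma decomp: assumes "SY (p @ s @ q)" "SY s" shows "FF (p @ s @ q) = Bp p @ FF s @ Fq q"
proof -
  have sne: "s \<noteq> []" using assms(2) by (simp add: symmetric_path_def is_path_def)
  have pq: "pth (s @ q)" using path_mid[of p "s@q" "[]"] assms sne by (simp add: symmetric_path_def)
  have "DD (tgt (last (s @ q)))"
  proof (cases "q = []")
    case True then show ?thesis using assms(2) by (simp add: symmetric_path_def)
  next
    case False then show ?thesis using assms(1) by (simp add: symmetric_path_def)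
  qed
  then have sq: "SY (s @ q)" using pq sne assms(2) by (simp add: symmetric_path_def)
  have "FF (p@s@q) = BB (p@(s@q))" using FB assms(1) by simp
  also have "\<dots> = Bp p @ BB (s @ q)" using B_app sne by simp
  also have "BB (s@q) = FF (s@q)" using FB sq by simp
  also have "FF (s@q) = FF s @ Fq q" using F_app sne by simp
  finally show ?thesis .
qed

lemma Bp_mono_len: "i \<le> j \<Longrightarrow> length (Bp (take i t)) \<le> length (Bp (take j t))"
proof -
  assume "i \<le> j"
  then have "take j t = take i t @ take (j - i) (drop i t)"
    by (metis le_add_diff_inverse take_add)
  then show ?thesis by (simp add: Bp_app)
qed

lemma occ_pos: assumes "SY t" "SY s" "i + length s \<le> length t" "take (length s) (drop i t) = s"
  shows "t = take i t @ s @ drop (i + length s) t"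
proof -
  have "drop i t = take (length s) (drop i t) @ drop (length s) (drop i t)" by (rule append_take_drop_id[symmetric])
  then have "drop i t = s @ drop (i + length s) t" using assms(4) by (simp add: add.commute)
  then show ?thesis by (metis append_take_drop_id)
qed

lemma key: assumes st: "SY s" "SY t" and r: "r + length (FF s) \<le> length (FF t)"
    "take (length (FF s)) (drop r (FF t)) = FF s"
  shows "\<exists>i. i + length s \<le> length t \<and> take (length s) (drop i t) = s \<and> length (Bp (take i t)) = r"
proof -
  define OE where "OE = {i. i + length s \<le> length t \<and> take (length s) (drop i t) = s}"
  define OF where "OF = {i. i + length (FF s) \<le> length (FF t) \<and> take (length (FF s)) (drop i (FF t)) = FF s}"
  define \<phi> where "\<phi> i = length (Bp (take i t))" for i
  have sne: "s \<noteq> []" using st by (simp add: symmetric_path_def is_path_def)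
  have img: "\<phi> ` OE \<subseteq> OF"
  proof
    fix r' assume "r' \<in> \<phi> ` OE"
    then obtain i where i: "i \<in> OE" "r' = \<phi> i" by auto
    then have teq: "t = take i t @ s @ drop (i + length s) t" using occ_pos st by (simp add: OE_def)
    have "FF (take i t @ s @ drop (i + length s) t) = Bp (take i t) @ FF s @ Fq (drop (i + length s) t)"
      by (rule decomp) (use st teq[symmetric] in simp)+
    then have "FF t = Bp (take i t) @ FF s @ Fq (drop (i + length s) t)"
      using teq[symmetric] by simp
    then show "r' \<in> OF" using i unfolding OF_def \<phi>_def by simp
  qed
  have inj: "inj_on \<phi> OE"
  proof -
    have "\<phi> i < \<phi> j" if "i \<in> OE" "j \<in> OE" "i < j" for i j
    proof -
      have "j + length s \<le> length t" using that(2) by (simp add: OE_def)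
      then have jl: "j < length t" using sne by (cases s) auto
      have eqs: "take (length s) (drop j t) = s" using that(2) by (simp add: OE_def)
      have "take (length s) (drop j t) ! 0 = t ! j" using sne jl by simp
      then have "s ! 0 = t ! j" using eqs by simp
      then have hs: "hd s = t ! j" using sne by (simp add: hd_conv_nth)
      have tp: "pth t" using st by (simp add: symmetric_path_def)
      have j1: "Suc (j-1) = j" using that(3) by simp
      have "\<forall>k. Suc k < length t \<longrightarrow> src (t ! Suc k) = tgt (t ! k)" using tp unfolding is_path_def by blast
      then have "Suc (j-1) < length t \<longrightarrow> src (t ! Suc (j - 1)) = tgt (t ! (j - 1))" by blast
      then have "src (t ! Suc (j - 1)) = tgt (t ! (j - 1))" using j1 jl by simp
      then have cc: "CC (tgt (t ! (j-1)))" using st hs that by (simp add: symmetric_path_def)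
      have inE: "t ! (j-1) \<in> E" using tp jl unfolding is_path_def by (meson diff_le_self le_less_trans nth_mem subsetD)
      have "take (Suc (j-1)) t = take (j-1) t @ [t ! (j-1)]"
        by (rule take_Suc_conv_app_nth) (use jl in simp)
      then have "take j t = take (j-1) t @ [t ! (j-1)]" using that(3) by simp
      then have "\<phi> j = \<phi> (j-1) + length (Bw (t ! (j-1)))" using cc by (simp add: \<phi>_def Bp_app Bp_def)
      moreover have "\<phi> i \<le> \<phi> (j-1)" unfolding \<phi>_def using that by (intro Bp_mono_len) simp
      moreover have "length (Bw (t ! (j-1))) > 0" using collBw inE cc by blast
      ultimately show ?thesis by linarith
    qed
    note lt = this
    show ?thesis
    proof (rule inj_onI)
      fix i j assume a: "i \<in> OE" "j \<in> OE" "\<phi> i = \<phi> j"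
      show "i = j"
      proof (rule ccontr)
        assume "i \<noteq> j"
        then have "i < j \<or> j < i" by arith
        then show False using lt[OF a(1,2)] lt[OF a(2,1)] a(3) by auto
      qed
    qed
  qed
  have finF: "finite OF" unfolding OF_def by (rule finite_subset[of _ "{..length (FF t)}"]) auto
  have rin: "r \<in> OF" using r by (simp add: OF_def)
  have c1: "card OE \<le> card OF" using card_inj_on_le[OF inj img finF] .
  have "card OF \<ge> 1" using rin finF by (metis One_nat_def Suc_leI card_gt_0_iff empty_iff)
  moreover have "occurs_k (FF s) (card OF) (FF t)"
    by (simp add: occurs_k_def occ_count_def OF_def)
  ultimately have "occurs_k s (card OF) t" using occ4[OF st(1) st(2)] by blast
  then have c2: "card OF \<le> card OE" by (simp add: occurs_k_def occ_count_def OE_def)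
  have "card (\<phi> ` OE) = card OF" using c1 c2 card_image[OF inj] by simp
  then have "\<phi> ` OE = OF" using card_subset_eq[OF finF img] by simp
  then obtain i where "i \<in> OE" "\<phi> i = r" using rin by (metis imageE)
  then show ?thesis by (auto simp: OE_def \<phi>_def)
qed

lemma pre_helper: assumes "xs @ us = ys @ vs" "length xs \<le> length ys" shows "\<exists>z. ys = xs @ z"
proof -
  have "take (length xs) (ys @ vs) = xs" using assms(1)[symmetric] by simp
  then have "take (length xs) ys = xs" using assms(2) by simp
  then show ?thesis by (metis append_take_drop_id)
qed

lemma suf_helper: assumes "us @ xs = vs @ ys" "length ys \<le> length xs" shows "\<exists>z. xs = z @ ys"
proof -
  have "rev ys @ rev vs = rev xs @ rev us" using arg_cong[OF assms(1), of rev] by simp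
  then obtain z where "rev xs = rev ys @ z" using pre_helper[of "rev ys" "rev vs" "rev xs" "rev us"] assms(2) by auto
  then have "xs = rev z @ ys" by (metis rev_append rev_rev_ident)
  then show ?thesis by blast
qed

lemma main: assumes ss: "SY s" and sA: "sublist (FF s) A"
  and mx: "\<And>s'. SY s' \<Longrightarrow> sublist (FF s') A \<Longrightarrow> sublist s s' \<Longrightarrow> s' = s"
  and tt: "SY t" and At: "sublist A (FF t)"
  and LL: "\<And>e. e \<in> E \<Longrightarrow> length (Fw e) \<le> L \<and> length (Bw e) \<le> L"
  shows "length A \<le> length (FF s) + 2 * L"
proof -
  obtain x y where A: "A = x @ FF s @ y" using sA by (auto simp: sublist_def)
  obtain a b where Ft: "FF t = a @ A @ b" using At by (auto simp: sublist_def)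
  have "length a + length x + length (FF s) \<le> length (FF t)" using Ft A by simp
  moreover have "take (length (FF s)) (drop (length a + length x) (FF t)) = FF s" using Ft A by simp
  ultimately obtain i where i: "i + length s \<le> length t" "take (length s) (drop i t) = s"
      "length (Bp (take i t)) = length a + length x"
    using key[OF ss tt, of "length a + length x"] by auto
  define p where "p = take i t"
  define q where "q = drop (i + length s) t"
  have teq: "t = p @ s @ q" unfolding p_def q_def using occ_pos[OF tt ss i(1,2)] .
  have sne: "s \<noteq> []" using ss by (simp add: symmetric_path_def is_path_def)
  have tp: "pth t" using tt by (simp add: symmetric_path_def)
  have dec: "FF t = Bp p @ FF s @ Fq q" using decomp[of p s q] tt ss teq by simp
  have "Bp p @ FF s @ Fq q = (a @ x) @ FF s @ (y @ b)" using Ft A dec by simp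
  moreover have "length (Bp p) = length (a @ x)" using i(3) p_def by simp
  ultimately have "Bp p = a @ x \<and> FF s @ Fq q = FF s @ (y @ b)" by (metis append_eq_append_conv)
  then have Bpe: "Bp p = a @ x" and Fqe: "Fq q = y @ b" by simp_all
  have ry: "length y \<le> L"
  proof (rule ccontr)
    assume "\<not> length y \<le> L"
    then have ly: "L < length y" by simp
    have qne: "q \<noteq> []" proof assume "q = []" then have "Fq q = []" by (simp add: Fq_def)
      then show False using Fqe ly by simp qed
    have qp: "pth q" using path_mid[of "p @ s" q "[]"] tp teq qne by simp
    have "src (hd q) = tgt (last (p @ s))" using path_link[of "p @ s" q] tp teq qne sne by simp
    then have dq: "DD (src (hd q))" using ss sne by (simp add: symmetric_path_def)
    have qdec: "q = hd q # tl q" using qne by simp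
    have hqE: "hd q \<in> E" using qp qne unfolding is_path_def by (metis hd_in_set subsetD)
    have "Fq q = Fw (hd q) @ Fq (tl q)" using dq by (subst qdec) (simp add: Fq_def)
    then obtain y' where y': "y = Fw (hd q) @ y'"
      using pre_helper[of "Fw (hd q)" "Fq (tl q)" y b] Fqe LL[OF hqE] ly by auto
    define P where "P k = (k < length q \<and> DD (tgt (q ! k)))" for k
    have "last t = last q" using teq qne by simp
    then have "tgt (q ! (length q - 1)) = tgt (last t)" using qne by (simp add: last_conv_nth)
    then have "P (length q - 1)" using tt qne by (simp add: P_def symmetric_path_def)
    define j where "j = (LEAST k. P k)"
    have Pj: "P j" unfolding j_def by (rule LeastI) fact
    have nP: "\<not> P k" if "k < j" for k using not_less_Least[of k P] that unfolding j_def by blast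
    define h where "h = take (Suc j) q"
    have hne: "h \<noteq> []" using qne by (simp add: h_def)
    have qh: "q = h @ drop (Suc j) q" by (simp add: h_def)
    have t2: "t = p @ (s @ h) @ drop (Suc j) q" using teq qh by (metis append.assoc)
    have sp: "pth (s @ h)" using path_mid[of p "s @ h" "drop (Suc j) q"] t2 tp sne by simp
    have lh: "last h = q ! j" using Pj by (simp add: h_def P_def take_Suc_conv_app_nth)
    have sy': "SY (s @ h)" using sp ss sne hne lh Pj by (simp add: symmetric_path_def P_def)
    have hdec: "h = hd q # take j (tl q)" unfolding h_def by (subst qdec) simp
    have nod: "\<not> DD (src e)" if "e \<in> set (take j (tl q))" for e
    proof -
      from that obtain k where k: "k < length (take j (tl q))" "e = take j (tl q) ! k"
        unfolding in_set_conv_nth by blast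
      have kj: "k < j" using k(1) by simp
      have "k < length q - 1" using k(1) by simp
      then have kq: "Suc k < length q" by linarith
      have "e = tl q ! k" using k kj by simp
      then have "e = q ! Suc k" using kq qne by (simp add: nth_tl)
      moreover have "src (q ! Suc k) = tgt (q ! k)" using qp kq unfolding is_path_def by blast
      ultimately show ?thesis using nP[OF kj] kq by (simp add: P_def)
    qed
    have "Fq h = Fw (hd q)" using dq nod by (subst hdec) (simp add: Fq_def filter_False)
    then have "FF (s @ h) = FF s @ Fw (hd q)" using F_app sne by simp
    moreover have "A = x @ (FF s @ Fw (hd q)) @ y'" using A y' by simp
    ultimately have "sublist (FF (s @ h)) A" by (metis sublist_appendI)
    moreover have "sublist s (s @ h)" by simp
    ultimately have "s @ h = s" using mx sy' by blast
    then show False using hne by simp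
  qed
  have rx: "length x \<le> L"
  proof (rule ccontr)
    assume "\<not> length x \<le> L"
    then have lx: "L < length x" by simp
    have pne: "p \<noteq> []" proof assume "p = []" then have "Bp p = []" by (simp add: Bp_def)
      then show False using Bpe lx by simp qed
    have pp: "pth p" using path_mid[of "[]" p "s @ q"] tp teq pne by simp
    define lp where "lp = last p"
    have "src (hd (s @ q)) = tgt (last p)" using path_link[of p "s @ q"] tp teq pne sne by simp
    then have cl: "CC (tgt lp)" using ss sne by (simp add: symmetric_path_def lp_def)
    have lpE: "lp \<in> E" using pp pne unfolding is_path_def lp_def by (metis last_in_set subsetD)
    have pdec: "p = butlast p @ [lp]" using pne by (simp add: lp_def)
    have "Bp p = Bp (butlast p) @ Bw lp" using cl by (subst pdec) (simp add: Bp_app Bp_def)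
    then obtain x' where x': "x = x' @ Bw lp"
      using suf_helper[of a x "Bp (butlast p)" "Bw lp"] Bpe LL[OF lpE] lx by auto
    define P where "P k = (k < length p \<and> CC (src (p ! k)))" for k
    have "p ! 0 = hd t" using teq pne by (simp add: hd_conv_nth nth_append)
    then have P0: "P 0" using tt pne by (simp add: P_def symmetric_path_def)
    have bnd: "\<And>k. P k \<Longrightarrow> k \<le> length p" by (simp add: P_def)
    define j where "j = (GREATEST k. P k)"
    have Pj: "P j" unfolding j_def by (rule GreatestI_nat[of P 0 "length p", OF P0 bnd])
    have gP: "k \<le> j" if "P k" for k unfolding j_def by (rule Greatest_le_nat[of P k "length p", OF that bnd])
    define g where "g = drop j p"
    have gne: "g \<noteq> []" using Pj by (simp add: g_def P_def)
    have t2: "t = take j p @ (g @ s) @ q" using teq by (simp add: g_def)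
    have sp: "pth (g @ s)" using path_mid[of "take j p" "g @ s" q] t2 tp gne by simp
    have hg: "hd g = p ! j" using Pj by (simp add: g_def P_def hd_drop_conv_nth)
    have sy': "SY (g @ s)" using sp ss sne gne hg Pj by (simp add: symmetric_path_def P_def)
    have lg: "last g = lp" using Pj by (simp add: g_def lp_def P_def)
    have gdec: "g = butlast g @ [lp]" using gne lg by (metis append_butlast_last_id)
    have noc: "\<not> CC (tgt e)" if "e \<in> set (butlast g)" for e
    proof -
      from that obtain k where k: "k < length (butlast g)" "e = butlast g ! k"
        unfolding in_set_conv_nth by blast
      then have kp: "Suc (j + k) < length p" by (simp add: g_def)
      have "e = p ! (j + k)" using k Pj by (simp add: nth_butlast g_def P_def)
      moreover have "src (p ! Suc (j + k)) = tgt (p ! (j + k))" using pp kp unfolding is_path_def by blast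
      moreover have "\<not> P (Suc (j + k))" using gP by fastforce
      ultimately show ?thesis using kp by (simp add: P_def)
    qed
    have "Bp g = Bw lp" using cl noc by (subst gdec) (simp add: Bp_def filter_False)
    have "FF (g @ s) = BB (g @ s)" using FB sy' by simp
    also have "\<dots> = Bp g @ BB s" using B_app sne by simp
    also have "BB s = FF s" using FB ss by simp
    finally have "FF (g @ s) = Bw lp @ FF s" using \<open>Bp g = Bw lp\<close> by simp
    moreover have "A = x' @ (Bw lp @ FF s) @ y" using A x' by simp
    ultimately have "sublist (FF (g @ s)) A" by (metis sublist_appendI)
    moreover have "sublist s (g @ s)" by simp
    ultimately have "g @ s = s" using mx sy' by blast
    then show False using gne by simp
  qed
  show ?thesis using A rx ry by simp
qed

end

theorem lemma7p2:
  fixes W :: "nat \<Rightarrow> 'a" and V :: "'v set" and E :: "'e set"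
    and src tgt :: "'e \<Rightarrow> 'v" and Fw Bw :: "'e \<Rightarrow> 'a list"
    and A :: "'a list" and s :: "'e list"
  assumes "recurrent W"
    and "rauzy_scheme W V E src tgt Fw Bw"
    and "factor_of A W"
    and "nonextendable E src tgt Fw A s"
  shows "int (length A) - 2 * int (l_max E Fw Bw) \<le> int (length (path_F E src tgt Fw s))
       \<and> length (path_F E src tgt Fw s) \<le> length A"
proof -
  note R = assms(2)[unfolded rauzy_scheme_def]
  have finE: "finite E" using R by (simp add: graph_with_words_def)
  have collBw: "Bw e \<noteq> []" if "e \<in> E" "collecting E src tgt (tgt e)" for e
  proof -
    have "card {e' \<in> E. tgt e' = tgt e} > 1" using that(2) by (simp add: collecting_def indeg_def)
    then obtain e2 where "e2 \<in> E" "tgt e2 = tgt e" "e2 \<noteq> e"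
    proof -
      assume h: "\<And>e2. e2 \<in> E \<Longrightarrow> tgt e2 = tgt e \<Longrightarrow> e2 \<noteq> e \<Longrightarrow> thesis"
      show thesis
      proof (rule ccontr)
        assume "\<not> thesis"
        then have "{e' \<in> E. tgt e' = tgt e} \<subseteq> {e}" using h by blast
        then have "card {e' \<in> E. tgt e' = tgt e} \<le> 1"
          using card_mono[of "{e}" "{e' \<in> E. tgt e' = tgt e}"] by simp
        then show False using \<open>card {e' \<in> E. tgt e' = tgt e} > 1\<close> by simp
      qed
    qed
    then show ?thesis using R that by metis
  qed
  interpret RS E src tgt Fw Bw
  proof
    show "finite E" by fact
  next
    fix e assume "e \<in> E" "collecting E src tgt (tgt e)" then show "Bw e \<noteq> []" by (rule collBw)
  qed (use R in blast)+
  define L where "L = l_max E Fw Bw"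
  have LL: "length (Fw e) \<le> L \<and> length (Bw e) \<le> L" if "e \<in> E" for e
    using finE that unfolding L_def l_max_def by (auto intro!: Max_ge)
  from assms(4) have ss: "SY s" and sA: "sublist (FF s) A"
    and mx: "\<And>s'. s' \<in> S_of E src tgt Fw A \<Longrightarrow> sublist s s' \<Longrightarrow> s' = s"
    by (auto simp: nonextendable_def S_of_def)
  obtain t where tt: "SY t" "sublist A (FF t)" using R assms(3) by blast
  have "length A \<le> length (FF s) + 2 * L"
    by (rule main[OF ss sA _ tt LL]) (auto intro: mx simp: S_of_def)
  moreover have "length (FF s) \<le> length A" using sA by (rule sublist_length_le)
  ultimately show ?thesis unfolding L_def by simp
qed

end
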